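(* Let $(v_n)$ be a sequence of weakly increasing functions $v_n:\mathbb{R}\to\mathbb{R}$ such that $\mathrm{Var}_{a^*}[v_n(L_n)]\le\exp[-\lambda n+o(n)]$ for some $\lambda>0$. Then for any interval $[\underline\gamma,\overline\gamma]\ni\hat L_{a^*}$ with $\inf_{\gamma<\underline\gamma}I_{a^*,\hat a}(\gamma)<\lambda$ and $\inf_{\gamma>\overline\gamma}I_{a^*,\hat a}(\gamma)<\lambda$, we have $\lim_{n\to\infty}\big(v_n(\overline\gamma)-v_n(\underline\gamma)\big)=0$.
   Context: Two actions $a^*\neq\hat a$ with Borel probability measures $\mu_{a^*}\neq\mu_{\hat a}$ on a signal space $X$ (subset of a Euclidean space), mutually absolutely continuous, with $\int(\frac{d\mu_{a'}}{d\mu_a})^\lambda d\mu_a<\infty$ for all $\lambda>0$, $a,a'\in\{a^*,\hat a\}$. Under action $a$, $x_1,\dots,x_n$ are i.i.d. from $\mu_a$, with probability, expectation, variance $\mathbb{P}_a,\mathbb{E}_a,\mathrm{Var}_a$. $L_n:=\frac1n\sum_{i=1}^n\log\frac{d\mu_{a^*}}{d\mu_{\hat a}}(x_i)$ and $\hat L_{a^*}:=\mathbb{E}_{a^*}[L_n]$. $I_{a^*,\hat a}(\ell):=\sup_{\lambda\in\mathbb{R}}\big(\lambda\ell-\log\int(\frac{d\mu_{a^*}}{d\mu_{\hat a}}(x))^\lambda d\mu_{a^*}(x)\big)$. $f(n)\le\exp[-\lambda n+o(n)]$ means $\limsup_n\frac1n\log f(n)\le-\lambda$. *)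

theory Defs
  imports "HOL-Probability.Probability"
begin

(* log-likelihood ratio  log (d mu_{a*} / d mu_{a^}) (x);  RN_deriv N M is dM/dN *)
definition llr :: "'a measure \<Rightarrow> 'a measure \<Rightarrow> 'a \<Rightarrow> real" where
  "llr Ms Mh x = ln (enn2real (RN_deriv Mh Ms x))"

definition Ln :: "'a measure \<Rightarrow> 'a measure \<Rightarrow> nat \<Rightarrow> (nat \<Rightarrow> 'a) \<Rightarrow> real" where
  "Ln Ms Mh n \<omega> = (\<Sum>i<n. llr Ms Mh (\<omega> i)) / real n"

(* law of the whole sample sequence under action a*: i.i.d. from Ms *)
definition sample_law :: "'a measure \<Rightarrow> (nat \<Rightarrow> 'a) measure" where
  "sample_law Ms = PiM UNIV (\<lambda>_::nat. Ms)"

definition rate_I :: "'a measure \<Rightarrow> 'a measure \<Rightarrow> real \<Rightarrow> ereal" where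
  "rate_I Ms Mh l = (SUP t\<in>(UNIV::real set).
      ereal (t * l - ln (\<integral>x. enn2real (RN_deriv Mh Ms x) powr t \<partial>Ms)))"

end

theory Submission
  imports Defs
begin

lemma exp_taylor2_bound:
  fixes x :: real
  shows "\<bar>exp x - 1 - x\<bar> \<le> x\<^sup>2 * exp \<bar>x\<bar>"
proof -
  obtain t where t: "\<bar>t\<bar> \<le> \<bar>x\<bar>" "exp x = (\<Sum>m<2. x ^ m / fact m) + exp t / fact 2 * x ^ 2"
    using Maclaurin_exp_le[of x 2] by blast
  have e: "exp x - 1 - x = exp t / 2 * x\<^sup>2" using t(2) by (simp add: numeral_2_eq_2)
  have "exp t \<le> exp \<bar>x\<bar>" using t(1) by simp
  then have "exp t / 2 \<le> exp \<bar>x\<bar>" using exp_gt_zero[of t] by linarith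
  then have "exp t / 2 * x\<^sup>2 \<le> exp \<bar>x\<bar> * x\<^sup>2"
    by (rule mult_right_mono) simp
  moreover have "0 \<le> exp t / 2 * x\<^sup>2" by simp
  ultimately show ?thesis unfolding e by (simp add: mult.commute)
qed

lemma abs_le_exp_sum: "\<bar>y::real\<bar> \<le> exp y + exp (-y)"
proof -
  have "y + 1 \<le> exp y" "- y + 1 \<le> exp (-y)" using exp_ge_add_one_self[of y] exp_ge_add_one_self[of "-y"] by (simp_all add: add.commute)
  then show ?thesis using exp_gt_zero[of y] exp_gt_zero[of "-y"] by arith
qed

lemma sq_le_exp: "(y::real)\<^sup>2 \<le> 2 * exp \<bar>y\<bar>"
proof -
  have "1 + \<bar>y\<bar> + \<bar>y\<bar>\<^sup>2/2 \<le> exp \<bar>y\<bar>" by (rule exp_lower_Taylor_quadratic) simp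
  then show ?thesis by simp
qed

lemma p1: "exp ((s+h) * y) - exp (s * y) - h * (y * exp (s * y)) = exp (s * y) * (exp (h * y) - 1 - h * (y::real))"
  by (simp add: algebra_simps flip: exp_add)
lemma p2: "exp (s * y) * ((h * y)\<^sup>2 * exp \<bar>y\<bar>) = h\<^sup>2 * ((y::real)\<^sup>2 * exp \<bar>y\<bar> * exp (s * y))"
  by (simp add: power_mult_distrib)
lemma p3: "h \<noteq> 0 \<Longrightarrow> y = s + h \<Longrightarrow> (L y - L s) / (y - s) - D = (L (s+h) - L s - h * D) / (h::real)"
  by (simp add: field_simps)
lemma p4: "h \<noteq> (0::real) \<Longrightarrow> h\<^sup>2 * K / \<bar>h\<bar> = \<bar>h\<bar> * K"
  by (simp add: power2_eq_square divide_simps)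
lemma p5: "((\<lambda>y. \<bar>y - s\<bar> * K) \<longlongrightarrow> 0) (at (s::real))"
proof -
  have "((\<lambda>y. \<bar>y - s\<bar> * K) \<longlongrightarrow> \<bar>s - s\<bar> * K) (at s)"
    by (intro tendsto_intros)
  then show ?thesis by simp
qed

context prob_space
begin

context
  fixes Y :: "'a \<Rightarrow> real"
  assumes Ym[measurable]: "Y \<in> borel_measurable M"
    and expint: "\<And>s. integrable M (\<lambda>x. exp (s * Y x))"
begin

lemma int_Y_exp: "integrable M (\<lambda>x. Y x * exp (s * Y x))"
proof (rule Bochner_Integration.integrable_bound[OF Bochner_Integration.integrable_add[OF expint[of "s+1"] expint[of "s-1"]]])
  show "AE x in M. norm (Y x * exp (s * Y x)) \<le> norm (exp ((s+1) * Y x) + exp ((s-1) * Y x))"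
  proof (intro AE_I2)
    fix x
    have "\<bar>Y x\<bar> * exp (s * Y x) \<le> (exp (Y x) + exp (- Y x)) * exp (s * Y x)"
      by (intro mult_right_mono abs_le_exp_sum) simp
    also have "\<dots> = exp ((s+1) * Y x) + exp ((s-1) * Y x)"
      by (simp add: algebra_simps flip: exp_add)
    finally show "norm (Y x * exp (s * Y x)) \<le> norm (exp ((s+1) * Y x) + exp ((s-1) * Y x))"
      by (simp add: abs_mult)
  qed
qed measurable

lemma int_Y: "integrable M Y"
  using int_Y_exp[of 0] by simp

lemma int_K: "integrable M (\<lambda>x. (Y x)\<^sup>2 * exp \<bar>Y x\<bar> * exp (s * Y x))"
proof (rule Bochner_Integration.integrable_bound[OF Bochner_Integration.integrable_add[OF integrable_mult_right[OF expint[of "s+2"]] integrable_mult_right[OF expint[of "s-2"]]]])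
  show "AE x in M. norm ((Y x)\<^sup>2 * exp \<bar>Y x\<bar> * exp (s * Y x)) \<le> norm (2 * exp ((s+2) * Y x) + 2 * exp ((s-2) * Y x))"
  proof (intro AE_I2)
    fix x
    have "(Y x)\<^sup>2 * exp \<bar>Y x\<bar> * exp (s * Y x) \<le> (2 * exp \<bar>Y x\<bar>) * exp \<bar>Y x\<bar> * exp (s * Y x)"
      by (intro mult_right_mono sq_le_exp) auto
    also have "\<dots> = 2 * exp (2 * \<bar>Y x\<bar>) * exp (s * Y x)"
      by (simp flip: exp_add)
    also have "\<dots> \<le> 2 * (exp (2 * Y x) + exp (-2 * Y x)) * exp (s * Y x)"
      by (intro mult_right_mono mult_left_mono) (auto simp: abs_if)
    also have "\<dots> = 2 * exp ((s+2) * Y x) + 2 * exp ((s-2) * Y x)"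
      by (simp add: algebra_simps flip: exp_add)
    finally show "norm ((Y x)\<^sup>2 * exp \<bar>Y x\<bar> * exp (s * Y x)) \<le> norm (2 * exp ((s+2) * Y x) + 2 * exp ((s-2) * Y x))"
      by simp
  qed
qed measurable

definition "Lam s = (\<integral>x. exp (s * Y x) \<partial>M)"
definition "DLam s = (\<integral>x. Y x * exp (s * Y x) \<partial>M)"

lemma Lam_lower: "exp (s * expectation Y) \<le> Lam s"
proof -
  let ?m = "expectation Y"
  have "(\<integral>x. exp (s * ?m) * (1 + s * (Y x - ?m)) \<partial>M) \<le> Lam s"
    unfolding Lam_def
  proof (rule integral_mono)
    show "integrable M (\<lambda>x. exp (s * ?m) * (1 + s * (Y x - ?m)))"
      using int_Y by (intro integrable_mult_right integrable_add integrable_diff integrable_mult_right) auto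
    fix x
    have "1 + s * (Y x - ?m) \<le> exp (s * (Y x - ?m))" by (rule exp_ge_add_one_self)
    then have "exp (s * ?m) * (1 + s * (Y x - ?m)) \<le> exp (s * ?m) * exp (s * (Y x - ?m))"
      by (intro mult_left_mono) auto
    then show "exp (s * ?m) * (1 + s * (Y x - ?m)) \<le> exp (s * Y x)"
      by (simp add: algebra_simps flip: exp_add)
  qed (rule expint)
  moreover have "(\<integral>x. exp (s * ?m) * (1 + s * (Y x - ?m)) \<partial>M) = exp (s * ?m)"
    using int_Y by (simp add: algebra_simps prob_space)
  ultimately show ?thesis by simp
qed

lemma Lam_pos: "Lam s > 0"
  using Lam_lower[of s] exp_gt_zero[of "s * expectation Y"] by linarith

lemma Lam_0: "Lam 0 = 1"
  by (simp add: Lam_def prob_space)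

lemma Lam_deriv: "(Lam has_real_derivative DLam s) (at s)"
proof -
  define K where "K = (\<integral>x. (Y x)\<^sup>2 * exp \<bar>Y x\<bar> * exp (s * Y x) \<partial>M)"
  have bound: "\<bar>Lam (s+h) - Lam s - h * DLam s\<bar> \<le> h\<^sup>2 * K" if h: "\<bar>h\<bar> \<le> 1" for h
  proof -
    have i1: "integrable M (\<lambda>x. exp ((s+h) * Y x) - exp (s * Y x) - h * (Y x * exp (s * Y x)))"
      using expint int_Y_exp by (intro Bochner_Integration.integrable_diff integrable_mult_right) auto
    have eq: "Lam (s+h) - Lam s - h * DLam s = (\<integral>x. exp ((s+h) * Y x) - exp (s * Y x) - h * (Y x * exp (s * Y x)) \<partial>M)"
      unfolding Lam_def DLam_def using expint int_Y_exp
      by (simp add: Bochner_Integration.integral_diff integrable_mult_right)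
    have "\<bar>Lam (s+h) - Lam s - h * DLam s\<bar> \<le> (\<integral>x. \<bar>exp ((s+h) * Y x) - exp (s * Y x) - h * (Y x * exp (s * Y x))\<bar> \<partial>M)"
      unfolding eq using integral_abs_bound[of M "\<lambda>x. exp ((s+h) * Y x) - exp (s * Y x) - h * (Y x * exp (s * Y x))"]
      by simp
    also have "\<dots> \<le> (\<integral>x. h\<^sup>2 * ((Y x)\<^sup>2 * exp \<bar>Y x\<bar> * exp (s * Y x)) \<partial>M)"
    proof (rule integral_mono)
      show "integrable M (\<lambda>x. h\<^sup>2 * ((Y x)\<^sup>2 * exp \<bar>Y x\<bar> * exp (s * Y x)))"
        using int_K by (rule integrable_mult_right)
      show "integrable M (\<lambda>x. \<bar>exp ((s+h) * Y x) - exp (s * Y x) - h * (Y x * exp (s * Y x))\<bar>)"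
        using i1 by (rule integrable_abs)
      fix x
      have "\<bar>exp ((s+h) * Y x) - exp (s * Y x) - h * (Y x * exp (s * Y x))\<bar> = \<bar>exp (s * Y x) * (exp (h * Y x) - 1 - h * Y x)\<bar>"
        by (simp only: p1)
      also have "\<dots> = exp (s * Y x) * \<bar>exp (h * Y x) - 1 - h * Y x\<bar>"
        by (simp add: abs_mult)
      also have "\<dots> \<le> exp (s * Y x) * ((h * Y x)\<^sup>2 * exp \<bar>h * Y x\<bar>)"
        by (intro mult_left_mono exp_taylor2_bound) auto
      also have "\<dots> \<le> exp (s * Y x) * ((h * Y x)\<^sup>2 * exp \<bar>Y x\<bar>)"
      proof -
        have "\<bar>h\<bar> * \<bar>Y x\<bar> \<le> 1 * \<bar>Y x\<bar>" using h by (intro mult_right_mono) auto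
        then have "\<bar>h * Y x\<bar> \<le> \<bar>Y x\<bar>" by (simp add: abs_mult)
        then have "exp \<bar>h * Y x\<bar> \<le> exp \<bar>Y x\<bar>" by simp
        then show ?thesis by (intro mult_left_mono) auto
      qed
      also have "\<dots> = h\<^sup>2 * ((Y x)\<^sup>2 * exp \<bar>Y x\<bar> * exp (s * Y x))"
        by (rule p2)
      finally show "\<bar>exp ((s+h) * Y x) - exp (s * Y x) - h * (Y x * exp (s * Y x))\<bar> \<le> h\<^sup>2 * ((Y x)\<^sup>2 * exp \<bar>Y x\<bar> * exp (s * Y x))" .
    qed
    also have "\<dots> = h\<^sup>2 * K" unfolding K_def by (rule integral_mult_right_zero)
    finally show ?thesis .
  qed
  have "((\<lambda>y. (Lam y - Lam s) / (y - s) - DLam s) \<longlongrightarrow> 0) (at s)"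
  proof (rule Lim_null_comparison)
    show "\<forall>\<^sub>F y in at s. norm ((Lam y - Lam s) / (y - s) - DLam s) \<le> \<bar>y - s\<bar> * K"
    proof -
    have "\<forall>y. y \<noteq> s \<and> dist y s < 1 \<longrightarrow> norm ((Lam y - Lam s) / (y - s) - DLam s) \<le> \<bar>y - s\<bar> * K"
    proof (intro allI impI)
      fix y assume y: "y \<noteq> s \<and> dist y s < 1"
      define h where "h = y - s"
      have h0: "h \<noteq> 0" and h1: "\<bar>h\<bar> \<le> 1" using y by (auto simp: h_def dist_real_def)
      have ys: "y = s + h" by (simp add: h_def)
      have "(Lam y - Lam s) / (y - s) - DLam s = (Lam (s+h) - Lam s - h * DLam s) / h"
        using p3[OF h0 ys] .
      also have "norm \<dots> = \<bar>Lam (s+h) - Lam s - h * DLam s\<bar> / \<bar>h\<bar>"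
        by simp
      also have "\<dots> \<le> h\<^sup>2 * K / \<bar>h\<bar>"
        using bound[OF h1] by (rule divide_right_mono) simp
      also have "\<dots> = \<bar>h\<bar> * K" using p4[OF h0] .
      finally show "norm ((Lam y - Lam s) / (y - s) - DLam s) \<le> \<bar>y - s\<bar> * K" by (simp add: h_def)
    qed
    then show ?thesis unfolding eventually_at by (intro exI[of _ 1]) simp
    qed
    show "((\<lambda>y. \<bar>y - s\<bar> * K) \<longlongrightarrow> 0) (at s)"
      by (rule p5)
  qed
  then have "((\<lambda>y. (Lam y - Lam s) / (y - s)) \<longlongrightarrow> DLam s) (at s)"
    by (rule LIM_zero_cancel)
  then show ?thesis using has_field_derivative_iff by blast
qed

end
end

context prob_space begin
context
  fixes Y :: "'a \<Rightarrow> real"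
  assumes Ym[measurable]: "Y \<in> borel_measurable M"
    and expint: "\<And>s. integrable M (\<lambda>x. exp (s * Y x))"
begin

lemma ln_Lam_deriv: "((\<lambda>s. ln (Lam Y s)) has_real_derivative DLam Y s / Lam Y s) (at s)"
proof -
  have "((\<lambda>s. ln (Lam Y s)) has_real_derivative (1 / Lam Y s) * DLam Y s) (at s)"
    by (rule DERIV_chain2[OF DERIV_ln_divide[OF Lam_pos[OF Ym expint]] Lam_deriv[OF Ym expint]])
  then show ?thesis by simp
qed

lemma ln_Lam_lower: "s * expectation Y \<le> ln (Lam Y s)"
proof -
  have "ln (exp (s * expectation Y)) \<le> ln (Lam Y s)"
    using Lam_lower[OF Ym expint, of s] Lam_pos[OF Ym expint, of s] by (subst ln_le_cancel_iff) auto
  then show ?thesis by simp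
qed

lemma exists_tilt:
  assumes g: "gam < gl" "gl \<le> expectation Y" and c: "c < lam"
    and rate: "\<And>s. s * gam - ln (Lam Y s) \<le> c"
  shows "\<exists>t h \<alpha> \<beta>. t \<le> 0 \<and> 0 < h \<and> \<beta> \<le> gl \<and> Lam Y (t - h) * exp (h * \<alpha>) < Lam Y t
     \<and> Lam Y (t + h) * exp (- (h * \<beta>)) < Lam Y t \<and> t * \<alpha> - ln (Lam Y t) < lam"
proof -
  define g' where "g' = (gam + gl) / 2"
  have g'1: "gam < g'" and g'2: "g' < gl" using g by (auto simp: g'_def)
  define psi where "psi s = s * g' - ln (Lam Y s)" for s
  have psi_deriv: "(psi has_real_derivative g' - DLam Y s / Lam Y s) (at s)" for s
    unfolding psi_def
    by (rule DERIV_diff[OF _ ln_Lam_deriv]) (auto intro!: derivative_eq_intros)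
  define R where "R = (\<bar>c\<bar> + 1) / (g' - gam)"
  have R: "R > 0" and R2: "R * (g' - gam) = \<bar>c\<bar> + 1" using g'1 by (auto simp: R_def)
  have "continuous_on {-R..0} psi"
    using psi_deriv by (intro continuous_at_imp_continuous_on ballI DERIV_isCont) blast
  then obtain t where t: "t \<in> {-R..0}" and tmax: "\<And>y. y \<in> {-R..0} \<Longrightarrow> psi y \<le> psi t"
    using continuous_attains_sup[of "{-R..0}" psi] R by auto
  have psi0: "psi 0 = 0" by (simp add: psi_def Lam_0[OF Ym expint])
  have psit: "psi t \<ge> 0" using tmax[of 0] R psi0 by simp
  have glob: "psi y \<le> psi t" for y
  proof (cases "y < -R")
    case True
    have "psi y = y * (g' - gam) + (y * gam - ln (Lam Y y))" by (simp add: psi_def algebra_simps)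
    also have "\<dots> \<le> y * (g' - gam) + c" using rate[of y] by simp
    also have "y * (g' - gam) \<le> -R * (g' - gam)" using True g'1 by (intro mult_right_mono) auto
    finally have "psi y \<le> - (\<bar>c\<bar> + 1) + c" using R2 by simp
    then show ?thesis using psit by linarith
  next
    case False
    show ?thesis
    proof (cases "y \<le> 0")
      case True then show ?thesis using False tmax by auto
    next
      case False
      have "psi y \<le> y * g' - y * expectation Y" using ln_Lam_lower[of y] by (simp add: psi_def)
      also have "\<dots> = y * (g' - expectation Y)" by (simp add: algebra_simps)
      also have "\<dots> \<le> 0" using False g'2 g(2) by (intro mult_nonneg_nonpos) auto
      finally show ?thesis using psit by linarith
    qed
  qed
  have "g' - DLam Y t / Lam Y t = 0"
    by (rule DERIV_local_max[OF psi_deriv zero_less_one]) (use glob in blast)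
  then have dphi: "((\<lambda>s. ln (Lam Y s)) has_real_derivative g') (at t)"
    using ln_Lam_deriv[of t] by simp
  have t0: "t \<le> 0" using t by simp
  have psit_c: "psi t \<le> c"
  proof -
    have "t * g' \<le> t * gam" using t0 g'1 by (intro mult_left_mono_neg) auto
    then show ?thesis using rate[of t] by (simp add: psi_def)
  qed
  define \<delta> where "\<delta> = min (gl - g') ((lam - c) / (\<bar>t\<bar> + 1))"
  have d0: "\<delta> > 0" using g'2 c by (auto simp: \<delta>_def)
  have d1: "g' + \<delta> \<le> gl" by (simp add: \<delta>_def)
  have d2: "\<bar>t\<bar> * \<delta> < lam - c"
  proof -
    have "\<bar>t\<bar> * \<delta> \<le> \<bar>t\<bar> * ((lam - c) / (\<bar>t\<bar> + 1))"
      by (intro mult_left_mono) (auto simp: \<delta>_def)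
    also have "\<dots> < (lam - c)"
      using c by (simp add: divide_simps)
    finally show ?thesis .
  qed
  from dphi have "((\<lambda>y. (ln (Lam Y y) - ln (Lam Y t)) / (y - t)) \<longlongrightarrow> g') (at t)"
    by (simp add: has_field_derivative_iff)
  then have "\<forall>\<^sub>F y in at t. dist ((ln (Lam Y y) - ln (Lam Y t)) / (y - t)) g' < \<delta>"
    using d0 by (simp add: tendsto_iff)
  then obtain d where d: "d > 0" and dd: "\<And>y. y \<noteq> t \<Longrightarrow> dist y t < d \<Longrightarrow>
      dist ((ln (Lam Y y) - ln (Lam Y t)) / (y - t)) g' < \<delta>"
    unfolding eventually_at by auto
  define h where "h = d / 2"
  have h: "h > 0" "h < d" using d by (auto simp: h_def)
  have up: "(ln (Lam Y (t+h)) - ln (Lam Y t)) / h < g' + \<delta>"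
    using dd[of "t+h"] h by (auto simp: dist_real_def)
  have lo: "(ln (Lam Y (t-h)) - ln (Lam Y t)) / (- h) > g' - \<delta>"
    using dd[of "t-h"] h by (auto simp: dist_real_def)
  have up2: "ln (Lam Y (t+h)) < ln (Lam Y t) + h * (g' + \<delta>)"
    using up h by (simp add: divide_simps algebra_simps)
  have lo2: "ln (Lam Y (t-h)) < ln (Lam Y t) - h * (g' - \<delta>)"
    using lo h by (simp add: divide_simps algebra_simps)
  have pos: "\<And>s. Lam Y s > 0" by (rule Lam_pos[OF Ym expint])
  have "Lam Y (t+h) * exp (- (h * (g' + \<delta>))) = exp (ln (Lam Y (t+h)) - h * (g' + \<delta>))"
    using pos[of "t+h"] by (simp add: exp_diff exp_minus field_simps exp_add[symmetric])
  also have "\<dots> < exp (ln (Lam Y t))" using up2 by simp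
  also have "\<dots> = Lam Y t" using pos by simp
  finally have A1: "Lam Y (t+h) * exp (- (h * (g' + \<delta>))) < Lam Y t" .
  have "Lam Y (t-h) * exp (h * (g' - \<delta>)) = exp (ln (Lam Y (t-h)) + h * (g' - \<delta>))"
    using pos by (simp add: exp_add)
  also have "\<dots> < exp (ln (Lam Y t))" using lo2 by simp
  also have "\<dots> = Lam Y t" using pos by simp
  finally have A2: "Lam Y (t-h) * exp (h * (g' - \<delta>)) < Lam Y t" .
  have A3: "t * (g' - \<delta>) - ln (Lam Y t) < lam"
  proof -
    have "t * (g' - \<delta>) - ln (Lam Y t) = psi t + \<bar>t\<bar> * \<delta>" using t0 by (simp add: psi_def algebra_simps)
    then show ?thesis using psit_c d2 by linarith
  qed
  show ?thesis
    using t0 h(1) d1 A1 A2 A3 by blast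
qed

end
end

lemma PiM_prod_integral:
  fixes f :: "'a \<Rightarrow> real"
  assumes P: "prob_space P" and f: "integrable P f"
  shows "integrable (PiM UNIV (\<lambda>_::nat. P)) (\<lambda>\<omega>. \<Prod>i<n. f (\<omega> i))"
    and "(\<integral>\<omega>. (\<Prod>i<n. f (\<omega> i)) \<partial>PiM UNIV (\<lambda>_::nat. P)) = (integral\<^sup>L P f) ^ n"
proof -
  interpret PP: product_prob_space "\<lambda>_::nat. P" UNIV
    by (simp add: product_prob_space_def product_prob_space_axioms_def product_sigma_finite_def
        prob_space_imp_sigma_finite P)
  have fm[measurable]: "f \<in> borel_measurable P" using f by auto
  define G where "G y = (\<Prod>i\<in>{..<n}. f (y i))" for y :: "nat \<Rightarrow> 'a"
  have Gm: "G \<in> borel_measurable (PiM {..<n} (\<lambda>_. P))" unfolding G_def by measurable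
  have rm: "(\<lambda>x. restrict x {..<n}) \<in> measurable (PiM UNIV (\<lambda>_::nat. P)) (PiM {..<n} (\<lambda>_. P))"
    by (rule measurable_restrict_subset) simp
  have D: "distr (PiM UNIV (\<lambda>_::nat. P)) (PiM {..<n} (\<lambda>_. P)) (\<lambda>x. restrict x {..<n}) = PiM {..<n} (\<lambda>_. P)"
    by (rule PP.distr_PiM_restrict_finite) auto
  have GR: "G (restrict x {..<n}) = (\<Prod>i<n. f (x i))" for x
    unfolding G_def by (intro prod.cong) auto
  have intG: "integrable (PiM {..<n} (\<lambda>_. P)) G"
    unfolding G_def by (rule PP.product_integrable_prod) (auto simp: f)
  have intG': "integral\<^sup>L (PiM {..<n} (\<lambda>_. P)) G = (integral\<^sup>L P f) ^ n"
    unfolding G_def by (subst PP.product_integral_prod) (auto simp: f)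
  show "integrable (PiM UNIV (\<lambda>_::nat. P)) (\<lambda>\<omega>. \<Prod>i<n. f (\<omega> i))"
    using intG integrable_distr_eq[OF rm Gm] D GR by simp
  show "(\<integral>\<omega>. (\<Prod>i<n. f (\<omega> i)) \<partial>PiM UNIV (\<lambda>_::nat. P)) = (integral\<^sup>L P f) ^ n"
    using intG' integral_distr[OF rm Gm] D GR by simp
qed

lemma pointwise_split:
  fixes t h x N \<alpha> \<beta> :: real
  assumes t: "t \<le> 0" and h: "h > 0"
  shows "exp (t * x) \<le> exp (t * (N * \<alpha>)) * (if x \<le> N * \<beta> then 1 else 0)
           + exp (h * (N * \<alpha>)) * exp ((t - h) * x) + exp (- (h * (N * \<beta>))) * exp ((t + h) * x)"
proof -
  have nn: "0 \<le> exp (t * (N * \<alpha>)) * (if x \<le> N * \<beta> then 1 else 0)"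
    "0 \<le> exp (h * (N * \<alpha>)) * exp ((t - h) * x)" "0 \<le> exp (- (h * (N * \<beta>))) * exp ((t + h) * x)"
    by auto
  consider "x < N * \<alpha>" | "N * \<alpha> \<le> x" "x \<le> N * \<beta>" | "x > N * \<beta>" by linarith
  then show ?thesis
  proof cases
    case 1
    have "t * x \<le> h * (N * \<alpha>) + (t - h) * x"
      using 1 h by (simp add: algebra_simps)
    then have "exp (t * x) \<le> exp (h * (N * \<alpha>)) * exp ((t - h) * x)"
      by (simp flip: exp_add)
    then show ?thesis using nn by linarith
  next
    case 2
    have "t * x \<le> t * (N * \<alpha>)" using 2 t by (intro mult_left_mono_neg) auto
    then have "exp (t * x) \<le> exp (t * (N * \<alpha>)) * (if x \<le> N * \<beta> then 1 else 0)"
      using 2 by simp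
    then show ?thesis using nn by linarith
  next
    case 3
    have "t * x \<le> - (h * (N * \<beta>)) + (t + h) * x"
      using 3 h by (simp add: algebra_simps)
    then have "exp (t * x) \<le> exp (- (h * (N * \<beta>))) * exp ((t + h) * x)"
      by (simp flip: exp_add)
    then show ?thesis using nn by linarith
  qed
qed


context prob_space begin
context
  fixes Y :: "'a \<Rightarrow> real"
  assumes Ym[measurable]: "Y \<in> borel_measurable M"
    and expint: "\<And>s. integrable M (\<lambda>x. exp (s * Y x))"
begin

lemma ld_lower:
  assumes g: "gam < gl" "gl \<le> expectation Y" and c: "c < lam"
    and rate: "\<And>s. s * gam - ln (Lam Y s) \<le> c"
  shows "\<exists>c1<lam. eventually (\<lambda>n. exp (- (c1 * real n)) / 2 \<le>
      measure (PiM UNIV (\<lambda>_::nat. M)) {\<omega> \<in> space (PiM UNIV (\<lambda>_::nat. M)). (\<Sum>i<n. Y (\<omega> i)) \<le> real n * gl}) sequentially"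
proof -
  obtain t h \<alpha> \<beta> where t0: "t \<le> 0" and h0: "0 < h" and bgl: "\<beta> \<le> gl"
    and A1: "Lam Y (t - h) * exp (h * \<alpha>) < Lam Y t"
    and A2: "Lam Y (t + h) * exp (- (h * \<beta>)) < Lam Y t"
    and A3: "t * \<alpha> - ln (Lam Y t) < lam"
    using exists_tilt[OF Ym expint g c rate] by blast
  have pos: "\<And>s. Lam Y s > 0" by (rule Lam_pos[OF Ym expint])
  define L where "L = Lam Y t"
  define a where "a = Lam Y (t - h) * exp (h * \<alpha>)"
  define b where "b = Lam Y (t + h) * exp (- (h * \<beta>))"
  define E where "E = exp (t * \<alpha>)"
  define c1 where "c1 = t * \<alpha> - ln L"
  have L0: "L > 0" using pos by (simp add: L_def)
  have a0: "0 \<le> a" "a < L" using pos A1 by (auto simp: a_def L_def intro: less_imp_le)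
  have b0: "0 \<le> b" "b < L" using pos A2 by (auto simp: b_def L_def intro: less_imp_le)
  have E0: "E > 0" by (simp add: E_def)
  have lima: "(\<lambda>n. (a / L) ^ n) \<longlonglongrightarrow> 0"
    using a0 L0 by (intro LIMSEQ_power_zero) (auto simp: divide_simps)
  have limb: "(\<lambda>n. (b / L) ^ n) \<longlonglongrightarrow> 0"
    using b0 L0 by (intro LIMSEQ_power_zero) (auto simp: divide_simps)
  have ev: "eventually (\<lambda>n. (a / L) ^ n < 1/4 \<and> (b / L) ^ n < 1/4) sequentially"
    using order_tendstoD(2)[OF lima, of "1/4"] order_tendstoD(2)[OF limb, of "1/4"]
    by (auto intro: eventually_conj)
  define PN where "PN = PiM UNIV (\<lambda>_::nat. M)"
  interpret PN: prob_space PN unfolding PN_def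
    by (intro prob_space_PiM) (rule prob_space_axioms)
  have main: "exp (- (c1 * real n)) / 2 \<le>
      measure PN {\<omega> \<in> space PN. (\<Sum>i<n. Y (\<omega> i)) \<le> real n * gl}"
    if n: "(a / L) ^ n < 1/4 \<and> (b / L) ^ n < 1/4" for n
  proof -
    define S where "S \<omega> = (\<Sum>i<n. Y (\<omega> i))" for \<omega> :: "nat \<Rightarrow> 'a"
    have Sm[measurable]: "S \<in> borel_measurable PN" unfolding S_def PN_def by measurable
    have expS: "exp (s * S \<omega>) = (\<Prod>i<n. exp (s * Y (\<omega> i)))" for s \<omega>
      unfolding S_def by (simp add: sum_distrib_left exp_sum)
    have intS: "integrable PN (\<lambda>\<omega>. exp (s * S \<omega>))" for s
      unfolding expS PN_def by (rule PiM_prod_integral(1)[OF prob_space_axioms expint])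
    have intS': "(\<integral>\<omega>. exp (s * S \<omega>) \<partial>PN) = Lam Y s ^ n" for s
      unfolding expS PN_def
      by (subst PiM_prod_integral(2)[OF prob_space_axioms expint]) (simp add: Lam_def[OF Ym expint])
    define B where "B = {\<omega> \<in> space PN. S \<omega> \<le> real n * \<beta>}"
    have Bm[measurable]: "B \<in> sets PN" unfolding B_def by measurable
    have pw: "exp (t * S \<omega>) \<le> exp (t * (real n * \<alpha>)) * indicator B \<omega>
           + exp (h * (real n * \<alpha>)) * exp ((t - h) * S \<omega>) + exp (- (h * (real n * \<beta>))) * exp ((t + h) * S \<omega>)"
      if "\<omega> \<in> space PN" for \<omega>
    proof -
      have ind: "indicator B \<omega> = (if S \<omega> \<le> real n * \<beta> then 1 else (0::real))"
        using that by (simp add: B_def indicator_def)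
      show ?thesis unfolding ind by (rule pointwise_split[OF t0 h0])
    qed
    have intB: "integrable PN (\<lambda>\<omega>. exp (t * (real n * \<alpha>)) * indicator B \<omega>)"
      using Bm by (intro integrable_mult_right) (auto simp: integrable_indicator_iff PN.emeasure_finite less_top[symmetric])
    have "(\<integral>\<omega>. exp (t * S \<omega>) \<partial>PN) \<le> (\<integral>\<omega>. exp (t * (real n * \<alpha>)) * indicator B \<omega>
           + exp (h * (real n * \<alpha>)) * exp ((t - h) * S \<omega>) + exp (- (h * (real n * \<beta>))) * exp ((t + h) * S \<omega>) \<partial>PN)"
      using pw intS intB by (intro integral_mono) (auto intro!: Bochner_Integration.integrable_add integrable_mult_right)
    also have "\<dots> = exp (t * (real n * \<alpha>)) * measure PN B
           + exp (h * (real n * \<alpha>)) * Lam Y (t - h) ^ n + exp (- (h * (real n * \<beta>))) * Lam Y (t + h) ^ n"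
      using intS intB Bm by (simp add: intS'[symmetric] Int_absorb2 sets.sets_into_space)
    finally have ineq: "L ^ n \<le> exp (t * (real n * \<alpha>)) * measure PN B
           + exp (h * (real n * \<alpha>)) * Lam Y (t - h) ^ n + exp (- (h * (real n * \<beta>))) * Lam Y (t + h) ^ n"
      by (simp add: intS' L_def)
    have e1: "exp (t * (real n * \<alpha>)) = E ^ n"
      unfolding E_def by (simp add: exp_of_nat_mult[symmetric] algebra_simps)
    have e2: "exp (h * (real n * \<alpha>)) * Lam Y (t - h) ^ n = a ^ n"
      unfolding a_def power_mult_distrib by (simp add: exp_of_nat_mult[symmetric] algebra_simps)
    have e3: "exp (- (h * (real n * \<beta>))) * Lam Y (t + h) ^ n = b ^ n"
      unfolding b_def power_mult_distrib by (simp add: exp_of_nat_mult[symmetric] algebra_simps)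
    have ineq2: "L ^ n \<le> E ^ n * measure PN B + a ^ n + b ^ n"
      using ineq e1 e2 e3 by simp
    have an: "a ^ n \<le> L ^ n / 4"
    proof -
      have "a ^ n = (a / L) ^ n * L ^ n" using L0 by (simp add: power_divide)
      also have "\<dots> \<le> 1/4 * L ^ n" using n L0 by (intro mult_right_mono) auto
      finally show ?thesis by simp
    qed
    have bn: "b ^ n \<le> L ^ n / 4"
    proof -
      have "b ^ n = (b / L) ^ n * L ^ n" using L0 by (simp add: power_divide)
      also have "\<dots> \<le> 1/4 * L ^ n" using n L0 by (intro mult_right_mono) auto
      finally show ?thesis by simp
    qed
    have "L ^ n / 2 \<le> E ^ n * measure PN B" using ineq2 an bn by linarith
    then have PB: "(L / E) ^ n / 2 \<le> measure PN B"
      using E0 by (simp add: power_divide divide_simps algebra_simps)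
    have "L / E = exp (- c1)" unfolding c1_def E_def using L0 by (simp add: exp_diff)
    then have "(L / E) ^ n = exp (- (c1 * real n))"
      by (simp add: exp_of_nat_mult[symmetric] mult.commute)
    then have "exp (- (c1 * real n)) / 2 \<le> measure PN B" using PB by simp
    also have "\<dots> \<le> measure PN {\<omega> \<in> space PN. (\<Sum>i<n. Y (\<omega> i)) \<le> real n * gl}"
    proof (rule PN.finite_measure_mono)
      show "B \<subseteq> {\<omega> \<in> space PN. (\<Sum>i<n. Y (\<omega> i)) \<le> real n * gl}"
      proof
        fix \<omega> assume "\<omega> \<in> B"
        moreover have "real n * \<beta> \<le> real n * gl" using bgl by (intro mult_left_mono) auto
        ultimately show "\<omega> \<in> {\<omega> \<in> space PN. (\<Sum>i<n. Y (\<omega> i)) \<le> real n * gl}"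
          by (auto simp: B_def S_def)
      qed
      show "{\<omega> \<in> space PN. (\<Sum>i<n. Y (\<omega> i)) \<le> real n * gl} \<in> sets PN"
        using Sm unfolding S_def by measurable
    qed
    finally show ?thesis .
  qed
  have "c1 < lam" using A3 by (simp add: c1_def L_def)
  moreover have "eventually (\<lambda>n. exp (- (c1 * real n)) / 2 \<le>
      measure PN {\<omega> \<in> space PN. (\<Sum>i<n. Y (\<omega> i)) \<le> real n * gl}) sequentially"
    using ev by (rule eventually_mono) (rule main)
  ultimately show ?thesis unfolding PN_def by blast
qed

end
end

lemma (in prob_space) var_lower:
  fixes V :: "'a \<Rightarrow> real"
  assumes Vm[measurable]: "V \<in> borel_measurable M" and V2: "integrable M (\<lambda>x. (V x)\<^sup>2)"
    and A: "A \<in> sets M" "\<And>x. x \<in> A \<Longrightarrow> V x \<le> a"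
    and C: "C \<in> sets M" "\<And>x. x \<in> C \<Longrightarrow> b \<le> V x" and ab: "a \<le> b"
  shows "min (prob A) (prob C) * ((b - a) / 2)\<^sup>2 \<le> variance V"
proof -
  have Vi: "integrable M V" by (rule square_integrable_imp_integrable[OF Vm V2])
  define \<mu> where "\<mu> = expectation V"
  have eqv: "(\<lambda>x. (V x - \<mu>)\<^sup>2) = (\<lambda>x. (V x)\<^sup>2 - 2 * \<mu> * V x + \<mu>\<^sup>2)"
    by (simp add: power2_diff algebra_simps)
  have int2: "integrable M (\<lambda>x. (V x - \<mu>)\<^sup>2)"
    unfolding eqv using V2 Vi
    by (intro Bochner_Integration.integrable_add Bochner_Integration.integrable_diff integrable_mult_right) auto
  have key: "prob D * ((b - a) / 2)\<^sup>2 \<le> variance V"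
    if D: "D \<in> sets M" "\<And>x. x \<in> D \<Longrightarrow> ((b - a) / 2)\<^sup>2 \<le> (V x - \<mu>)\<^sup>2" for D
  proof -
    have "prob D * ((b - a) / 2)\<^sup>2 = (\<integral>x. indicator D x * ((b - a) / 2)\<^sup>2 \<partial>M)"
      using D(1) by simp
    also have "\<dots> \<le> (\<integral>x. (V x - \<mu>)\<^sup>2 \<partial>M)"
    proof (rule integral_mono)
      show "integrable M (\<lambda>x. indicator D x * ((b - a) / 2)\<^sup>2)"
        using D(1) by (intro integrable_mult_left) (auto simp: integrable_indicator_iff emeasure_finite less_top[symmetric])
      show "integrable M (\<lambda>x. (V x - \<mu>)\<^sup>2)" by (rule int2)
      fix x show "indicator D x * ((b - a) / 2)\<^sup>2 \<le> (V x - \<mu>)\<^sup>2"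
        using D(2)[of x] by (auto simp: indicator_def)
    qed
    finally show ?thesis by (simp add: \<mu>_def)
  qed
  show ?thesis
  proof (cases "\<mu> \<ge> (a + b) / 2")
    case True
    have "prob A * ((b - a) / 2)\<^sup>2 \<le> variance V"
    proof (rule key[OF A(1)])
      fix x assume "x \<in> A"
      then have "(b - a) / 2 \<le> \<mu> - V x" "0 \<le> (b - a) / 2" using A(2)[of x] True ab by auto
      then have "((b - a) / 2)\<^sup>2 \<le> (\<mu> - V x)\<^sup>2" by (intro power_mono) auto
      then show "((b - a) / 2)\<^sup>2 \<le> (V x - \<mu>)\<^sup>2" by (simp add: power2_commute)
    qed
    then show ?thesis
      by (rule order_trans[rotated]) (intro mult_right_mono min.cobounded1 zero_le_power2)
  next
    case False
    have "prob C * ((b - a) / 2)\<^sup>2 \<le> variance V"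
    proof (rule key[OF C(1)])
      fix x assume "x \<in> C"
      then have "(b - a) / 2 \<le> V x - \<mu>" "0 \<le> (b - a) / 2" using C(2)[of x] False ab by auto
      then show "((b - a) / 2)\<^sup>2 \<le> (V x - \<mu>)\<^sup>2" by (intro power_mono) auto
    qed
    then show ?thesis
      by (rule order_trans[rotated]) (intro mult_right_mono min.cobounded2 zero_le_power2)
  qed
qed

lemma rn_facts:
  fixes Ms Mh :: "'a measure"
  assumes Ms_prob: "prob_space Ms" and Mh_prob: "prob_space Mh"
    and sets_eq: "sets Ms = sets Mh"
    and ac1: "absolutely_continuous Ms Mh" and ac2: "absolutely_continuous Mh Ms"
    and moments: "\<And>M M' t. M \<in> {Ms, Mh} \<Longrightarrow> M' \<in> {Ms, Mh} \<Longrightarrow> t > 0 \<Longrightarrow>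
        (\<integral>\<^sup>+ x. ennreal (enn2real (RN_deriv M M' x) powr t) \<partial>M) < \<infinity>"
  shows "llr Ms Mh \<in> borel_measurable Ms"
    and "\<And>s. integrable Ms (\<lambda>x. exp (s * llr Ms Mh x))"
    and "\<And>s. (\<integral>x. exp (s * llr Ms Mh x) \<partial>Ms) = (\<integral>x. enn2real (RN_deriv Mh Ms x) powr s \<partial>Ms)"
proof -
  interpret Ms: prob_space Ms by fact
  interpret Mh: prob_space Mh by fact
  define f where "f = RN_deriv Mh Ms"
  define g where "g = RN_deriv Ms Mh"
  have fMh[measurable]: "f \<in> borel_measurable Mh" unfolding f_def by simp
  have fMs[measurable]: "f \<in> borel_measurable Ms" using fMh by (simp add: measurable_cong_sets[OF sets_eq refl])
  have gMs[measurable]: "g \<in> borel_measurable Ms" unfolding g_def by simp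
  have dens_f: "density Mh f = Ms" unfolding f_def by (rule Mh.density_RN_deriv[OF ac2 sets_eq])
  have dens_g: "density Ms g = Mh" unfolding g_def by (rule Ms.density_RN_deriv[OF ac1 sets_eq[symmetric]])
  have "density Ms (\<lambda>x. g x * f x) = density (density Ms g) f"
    by (rule density_density_eq[symmetric]) auto
  also have "\<dots> = Ms" using dens_g dens_f by simp
  also have "\<dots> = density Ms (\<lambda>_. 1)" by (simp add: density_1)
  finally have "AE x in Ms. g x * f x = 1"
    by (subst (asm) Ms.density_unique_iff) auto
  then have AEfg: "AE x in Ms. 0 < enn2real (f x) \<and> enn2real (g x) = 1 / enn2real (f x)"
  proof (rule AE_mp, intro AE_I2 impI)
    fix x assume gf: "g x * f x = 1"
    have "enn2real (g x) * enn2real (f x) = 1" using arg_cong[OF gf, of enn2real] by (simp add: enn2real_mult)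
    moreover have "0 \<le> enn2real (f x)" by simp
    ultimately show "0 < enn2real (f x) \<and> enn2real (g x) = 1 / enn2real (f x)"
      by (metis divide_eq_eq less_eq_real_def mult_eq_0_iff zero_neq_one)
  qed
  have AEfin: "AE x in Mh. f x \<noteq> \<infinity>"
    unfolding f_def by (rule Mh.RN_deriv_finite[OF _ ac2 sets_eq]) (rule Ms.sigma_finite_measure_axioms)
  have Ym: "llr Ms Mh \<in> borel_measurable Ms"
    unfolding llr_def f_def[symmetric] by measurable
  then show "llr Ms Mh \<in> borel_measurable Ms" .
  have AEeq: "AE x in Ms. exp (s * llr Ms Mh x) = enn2real (f x) powr s" for s
    using AEfg by eventually_elim (simp add: llr_def f_def[symmetric] powr_def mult.commute)
  show "(\<integral>x. exp (s * llr Ms Mh x) \<partial>Ms) = (\<integral>x. enn2real (RN_deriv Mh Ms x) powr s \<partial>Ms)" for s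
    unfolding f_def[symmetric] using AEeq[of s] by (rule integral_cong_AE[rotated 2]) (use Ym fMs in auto)
  show "integrable Ms (\<lambda>x. exp (s * llr Ms Mh x))" for s
  proof (rule integrableI_nonneg)
    show "(\<lambda>x. exp (s * llr Ms Mh x)) \<in> borel_measurable Ms" using Ym by measurable
    show "AE x in Ms. 0 \<le> exp (s * llr Ms Mh x)" by simp
    have "(\<integral>\<^sup>+ x. ennreal (exp (s * llr Ms Mh x)) \<partial>Ms) = (\<integral>\<^sup>+ x. ennreal (enn2real (f x) powr s) \<partial>Ms)"
      using AEeq[of s] by (intro nn_integral_cong_AE) auto
    also have "\<dots> < \<infinity>"
    proof (cases "s \<ge> 0")
      case True
      have "(\<integral>\<^sup>+ x. ennreal (enn2real (f x) powr s) \<partial>Ms) = (\<integral>\<^sup>+ x. f x * ennreal (enn2real (f x) powr s) \<partial>Mh)"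
        by (subst dens_f[symmetric], subst nn_integral_density) auto
      also have "\<dots> = (\<integral>\<^sup>+ x. ennreal (enn2real (f x) powr (s + 1)) \<partial>Mh)"
      proof (rule nn_integral_cong_AE)
        show "AE x in Mh. f x * ennreal (enn2real (f x) powr s) = ennreal (enn2real (f x) powr (s + 1))"
          using AEfin
        proof eventually_elim
          case (elim x)
          define r where "r = enn2real (f x)"
          have fx: "f x = ennreal r" using elim by (simp add: r_def ennreal_enn2real_if)
          have r0: "r \<ge> 0" by (simp add: r_def)
          have "r * r powr s = r powr (s + 1)"
            using r0 by (cases "r = 0") (auto simp: powr_add)
          then show ?case unfolding fx r_def[symmetric] using r0 by (simp add: ennreal_mult[symmetric])
        qed
      qed
      also have "\<dots> < \<infinity>" using moments[of Mh Ms "s + 1"] True by (simp add: f_def)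
      finally show ?thesis .
    next
      case False
      have "(\<integral>\<^sup>+ x. ennreal (enn2real (f x) powr s) \<partial>Ms) = (\<integral>\<^sup>+ x. ennreal (enn2real (g x) powr (- s)) \<partial>Ms)"
      proof (rule nn_integral_cong_AE)
        show "AE x in Ms. ennreal (enn2real (f x) powr s) = ennreal (enn2real (g x) powr (- s))"
          using AEfg
        proof eventually_elim
          case (elim x)
          then have "enn2real (g x) powr (- s) = enn2real (f x) powr s"
            by (simp add: powr_divide powr_minus_divide)
          then show ?case by simp
        qed
      qed
      also have "\<dots> < \<infinity>" using moments[of Ms Mh "- s"] False by (simp add: g_def)
      finally show ?thesis .
    qed
    finally show "(\<integral>\<^sup>+ x. ennreal (exp (s * llr Ms Mh x)) \<partial>Ms) < \<infinity>" .
  qed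
qed

theorem lemma2:
  fixes X :: "'a::euclidean_space set"
    and Ms Mh :: "'a measure"
    and v :: "nat \<Rightarrow> real \<Rightarrow> real"
    and lam gl gu :: real
  assumes Ms_prob: "prob_space Ms" and Mh_prob: "prob_space Mh"
    and Ms_sets: "sets Ms = sets (restrict_space borel X)"
    and Mh_sets: "sets Mh = sets (restrict_space borel X)"
    and distinct: "Ms \<noteq> Mh"
    and ac1: "absolutely_continuous Ms Mh" and ac2: "absolutely_continuous Mh Ms"
    and moments: "\<And>M M' t. M \<in> {Ms, Mh} \<Longrightarrow> M' \<in> {Ms, Mh} \<Longrightarrow> t > 0 \<Longrightarrow>
        (\<integral>\<^sup>+ x. ennreal (enn2real (RN_deriv M M' x) powr t) \<partial>M) < \<infinity>"
    and mono_v: "\<And>n. mono (v n)"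
    and lam_pos: "lam > 0"
    and var_rate: "\<forall>\<epsilon>>0. eventually (\<lambda>n.
        integrable (sample_law Ms) (\<lambda>\<omega>. (v n (Ln Ms Mh n \<omega>))\<^sup>2) \<and>
        prob_space.variance (sample_law Ms) (\<lambda>\<omega>. v n (Ln Ms Mh n \<omega>))
          \<le> exp (- (lam - \<epsilon>) * real n)) sequentially"
    and interval: "gl \<le> (\<integral>x. llr Ms Mh x \<partial>Ms)" "(\<integral>x. llr Ms Mh x \<partial>Ms) \<le> gu"
    and left: "(INF g\<in>{..<gl}. rate_I Ms Mh g) < ereal lam"
    and right: "(INF g\<in>{gu<..}. rate_I Ms Mh g) < ereal lam"
  shows "(\<lambda>n. v n gu - v n gl) \<longlonglongrightarrow> 0"
proof -
  interpret Ms: prob_space Ms by fact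
  have sets_eq: "sets Ms = sets Mh" using Ms_sets Mh_sets by simp
  define Y where "Y = llr Ms Mh"
  have Ym[measurable]: "Y \<in> borel_measurable Ms"
    unfolding Y_def by (rule rn_facts(1)[OF Ms_prob Mh_prob sets_eq ac1 ac2 moments])
  have expint: "\<And>s. integrable Ms (\<lambda>x. exp (s * Y x))"
    unfolding Y_def by (rule rn_facts(2)[OF Ms_prob Mh_prob sets_eq ac1 ac2 moments])
  have LamEq: "Ms.Lam Y s = (\<integral>x. enn2real (RN_deriv Mh Ms x) powr s \<partial>Ms)" for s
  proof -
    have "Ms.Lam Y s = (\<integral>x. exp (s * Y x) \<partial>Ms)" by (rule Ms.Lam_def[OF Ym expint])
    also have "\<dots> = (\<integral>x. enn2real (RN_deriv Mh Ms x) powr s \<partial>Ms)"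
      unfolding Y_def by (rule rn_facts(3)[OF Ms_prob Mh_prob sets_eq ac1 ac2 moments])
    finally show ?thesis .
  qed
  have rate_bound: "\<exists>c<lam. \<forall>s. s * gam - ln (Ms.Lam Y s) \<le> c" if rg: "rate_I Ms Mh gam < ereal lam" for gam
  proof -
    obtain c where c1: "rate_I Ms Mh gam < ereal c" and c2: "ereal c < ereal lam"
      using ereal_dense2[OF rg] by blast
    have "s * gam - ln (Ms.Lam Y s) \<le> c" for s
    proof -
      have "ereal (s * gam - ln (Ms.Lam Y s)) \<le> rate_I Ms Mh gam"
        unfolding rate_I_def LamEq by (rule SUP_upper) simp
      then have "ereal (s * gam - ln (Ms.Lam Y s)) < ereal c" using c1 by (rule le_less_trans)
      then show ?thesis by simp
    qed
    then show ?thesis using c2 by auto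
  qed
  obtain gam1 where gam1: "gam1 < gl" "rate_I Ms Mh gam1 < ereal lam"
    using left by (auto simp: INF_less_iff)
  obtain c where c: "c < lam" "\<And>s. s * gam1 - ln (Ms.Lam Y s) \<le> c"
    using rate_bound[OF gam1(2)] by blast
  have mY: "Ms.expectation Y = (\<integral>x. llr Ms Mh x \<partial>Ms)" by (simp add: Y_def)
  obtain c1 where c1: "c1 < lam" and ev1: "eventually (\<lambda>n. exp (- (c1 * real n)) / 2 \<le>
      measure (PiM UNIV (\<lambda>_::nat. Ms)) {\<omega> \<in> space (PiM UNIV (\<lambda>_::nat. Ms)). (\<Sum>i<n. Y (\<omega> i)) \<le> real n * gl}) sequentially"
  proof -
    have "gl \<le> Ms.expectation Y" using interval(1) mY by simp
    from Ms.ld_lower[OF Ym expint gam1(1) this c(1) c(2)] that show ?thesis by blast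
  qed
  obtain gam2 where gam2: "gu < gam2" "rate_I Ms Mh gam2 < ereal lam"
    using right by (auto simp: INF_less_iff)
  obtain c' where c': "c' < lam" "\<And>s. s * gam2 - ln (Ms.Lam Y s) \<le> c'"
    using rate_bound[OF gam2(2)] by blast
  define Y' where "Y' x = - Y x" for x
  have Ym'[measurable]: "Y' \<in> borel_measurable Ms" unfolding Y'_def by measurable
  have expint': "integrable Ms (\<lambda>x. exp (s * Y' x))" for s
    unfolding Y'_def using expint[of "- s"] by simp
  have LamY': "Ms.Lam Y' s = Ms.Lam Y (- s)" for s
    unfolding Ms.Lam_def[OF Ym expint] Ms.Lam_def[OF Ym' expint'] Y'_def by simp
  have rate': "s * (- gam2) - ln (Ms.Lam Y' s) \<le> c'" for s
    using c'(2)[of "- s"] unfolding LamY' by simp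
  have Y'eq: "Y' = (\<lambda>x. - Y x)" by (simp add: Y'_def fun_eq_iff)
  have mY': "Ms.expectation Y' = - (\<integral>x. llr Ms Mh x \<partial>Ms)" unfolding Y'eq Y_def by simp
  obtain c2 where c2: "c2 < lam" and ev2: "eventually (\<lambda>n. exp (- (c2 * real n)) / 2 \<le>
      measure (PiM UNIV (\<lambda>_::nat. Ms)) {\<omega> \<in> space (PiM UNIV (\<lambda>_::nat. Ms)). (\<Sum>i<n. Y' (\<omega> i)) \<le> real n * (- gu)}) sequentially"
  proof -
    have "- gam2 < - gu" "- gu \<le> Ms.expectation Y'" using gam2(1) interval(2) mY' by simp_all
    from Ms.ld_lower[OF Ym' expint' this c'(1) rate'] that show ?thesis by blast
  qed
  define cm where "cm = max c1 c2"
  define \<epsilon> where "\<epsilon> = (lam - cm) / 2"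
  have eps: "\<epsilon> > 0" using c1 c2 by (simp add: \<epsilon>_def cm_def)
  define SL where "SL = sample_law Ms"
  have SL_def': "SL = PiM UNIV (\<lambda>_::nat. Ms)" by (simp add: SL_def sample_law_def)
  interpret SL: prob_space SL unfolding SL_def' by (intro prob_space_PiM) (rule Ms.prob_space_axioms)
  have ev3: "eventually (\<lambda>n. integrable SL (\<lambda>\<omega>. (v n (Ln Ms Mh n \<omega>))\<^sup>2) \<and>
        SL.variance (\<lambda>\<omega>. v n (Ln Ms Mh n \<omega>)) \<le> exp (- (lam - \<epsilon>) * real n)) sequentially"
    using var_rate eps unfolding SL_def by blast
  have bound: "\<bar>v n gu - v n gl\<bar> \<le> sqrt (8 * exp (- (\<epsilon> * real n)))"
    if n0: "n > 0"
    and P1: "exp (- (c1 * real n)) / 2 \<le> measure SL {\<omega> \<in> space SL. (\<Sum>i<n. Y (\<omega> i)) \<le> real n * gl}"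
    and P2: "exp (- (c2 * real n)) / 2 \<le> measure SL {\<omega> \<in> space SL. (\<Sum>i<n. Y' (\<omega> i)) \<le> real n * (- gu)}"
    and V2: "integrable SL (\<lambda>\<omega>. (v n (Ln Ms Mh n \<omega>))\<^sup>2)"
    and Vvar: "SL.variance (\<lambda>\<omega>. v n (Ln Ms Mh n \<omega>)) \<le> exp (- (lam - \<epsilon>) * real n)"
    for n
  proof -
    define S where "S \<omega> = (\<Sum>i<n. Y (\<omega> i))" for \<omega> :: "nat \<Rightarrow> 'a"
    have Sm[measurable]: "S \<in> borel_measurable SL" unfolding S_def SL_def' by measurable
    have LnS: "Ln Ms Mh n \<omega> = S \<omega> / real n" for \<omega>
      by (simp add: Ln_def S_def Y_def)
    have vm: "v n \<in> borel_measurable borel" by (rule borel_measurable_mono[OF mono_v])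
    have Vm: "(\<lambda>\<omega>. v n (Ln Ms Mh n \<omega>)) \<in> borel_measurable SL"
      unfolding LnS using vm by measurable
    define A where "A = {\<omega> \<in> space SL. S \<omega> \<le> real n * gl}"
    define C where "C = {\<omega> \<in> space SL. real n * gu \<le> S \<omega>}"
    have Am: "A \<in> sets SL" unfolding A_def by measurable
    have Cm: "C \<in> sets SL" unfolding C_def by measurable
    have nA: "v n (Ln Ms Mh n \<omega>) \<le> v n gl" if "\<omega> \<in> A" for \<omega>
    proof -
      have "S \<omega> / real n \<le> gl" using that n0 by (simp add: A_def divide_simps mult.commute)
      then show ?thesis unfolding LnS using mono_v[of n] by (simp add: monoD)
    qed
    have nC: "v n gu \<le> v n (Ln Ms Mh n \<omega>)" if "\<omega> \<in> C" for \<omega>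
    proof -
      have "gu \<le> S \<omega> / real n" using that n0 by (simp add: C_def divide_simps mult.commute)
      then show ?thesis unfolding LnS using mono_v[of n] by (simp add: monoD)
    qed
    have glu: "gl \<le> gu" using interval by simp
    have ab: "v n gl \<le> v n gu" using mono_v[of n] glu by (simp add: monoD)
    have var: "min (SL.prob A) (SL.prob C) * ((v n gu - v n gl) / 2)\<^sup>2 \<le> SL.variance (\<lambda>\<omega>. v n (Ln Ms Mh n \<omega>))"
      by (rule SL.var_lower[OF Vm V2 Am nA Cm nC ab])
    have PA: "exp (- (cm * real n)) / 2 \<le> SL.prob A"
    proof -
      have "exp (- (cm * real n)) \<le> exp (- (c1 * real n))" by (simp add: cm_def mult_right_mono)
      then have "exp (- (cm * real n)) / 2 \<le> exp (- (c1 * real n)) / 2" by simp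
      also note P1
      finally show ?thesis unfolding A_def S_def .
    qed
    have PC: "exp (- (cm * real n)) / 2 \<le> SL.prob C"
    proof -
      have "exp (- (cm * real n)) \<le> exp (- (c2 * real n))" by (simp add: cm_def mult_right_mono)
      then have "exp (- (cm * real n)) / 2 \<le> exp (- (c2 * real n)) / 2" by simp
      also note P2
      also have "{\<omega> \<in> space SL. (\<Sum>i<n. Y' (\<omega> i)) \<le> real n * (- gu)} = C"
        by (auto simp: C_def S_def Y'_def sum_negf)
      finally show ?thesis .
    qed
    define d where "d = v n gu - v n gl"
    have "exp (- (cm * real n)) / 2 * (d / 2)\<^sup>2 \<le> min (SL.prob A) (SL.prob C) * (d / 2)\<^sup>2"
      using PA PC by (intro mult_right_mono) auto
    also have "\<dots> \<le> exp (- (lam - \<epsilon>) * real n)" using var Vvar by (simp add: d_def)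
    finally have "exp (- (cm * real n)) * d\<^sup>2 \<le> 8 * exp (- (lam - \<epsilon>) * real n)"
      by (simp add: power_divide)
    then have "d\<^sup>2 \<le> 8 * exp (- (lam - \<epsilon>) * real n) / exp (- (cm * real n))"
      by (simp add: pos_le_divide_eq mult.commute)
    also have "\<dots> = 8 * exp (- (lam - \<epsilon>) * real n - (- (cm * real n)))"
      by (simp only: exp_diff times_divide_eq_right)
    also have "- (lam - \<epsilon>) * real n - (- (cm * real n)) = - (\<epsilon> * real n)"
      by (simp add: \<epsilon>_def field_simps)
    finally have "d\<^sup>2 \<le> 8 * exp (- (\<epsilon> * real n))" .
    then have "sqrt (d\<^sup>2) \<le> sqrt (8 * exp (- (\<epsilon> * real n)))" by (rule real_sqrt_le_mono)
    then show ?thesis by (simp add: d_def)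
  qed
  have evall: "eventually (\<lambda>n. \<bar>v n gu - v n gl\<bar> \<le> sqrt (8 * exp (- (\<epsilon> * real n)))) sequentially"
  proof -
    have "eventually (\<lambda>n. n > (0::nat)) sequentially" by (rule eventually_gt_at_top)
    with ev1 ev2 ev3 show ?thesis
      unfolding SL_def'[symmetric]
      by eventually_elim (use bound in blast)
  qed
  have lim: "(\<lambda>n. sqrt (8 * exp (- (\<epsilon> * real n)))) \<longlonglongrightarrow> 0"
  proof -
    have e: "exp (- (\<epsilon> * real n)) = exp (- \<epsilon>) ^ n" for n
      by (simp add: exp_of_nat_mult[symmetric] mult.commute)
    have e1: "exp (- \<epsilon>) < 1" using eps by simp
    have "(\<lambda>n. exp (- \<epsilon>) ^ n) \<longlonglongrightarrow> 0" by (rule LIMSEQ_power_zero) (use e1 in simp)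
    then have "(\<lambda>n. sqrt (8 * exp (- \<epsilon>) ^ n)) \<longlonglongrightarrow> sqrt (8 * 0)"
      by (intro tendsto_intros) (use e1 in simp)
    then show ?thesis by (simp add: e)
  qed
  show ?thesis
    by (rule Lim_null_comparison[OF _ lim]) (use evall in simp)
qed

end
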